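(* Let $n\in\mathbb{N}_0$ and $p\in\mathbb{N}_0$ with $p\ge n$. Let $\psi_{i,n}$ denote the $n$-th primitive of the Legendre polynomial $L_i$. Then for integers $0\le k\le p$, \[ \int_{-1}^1\psi_{p+k,n}(x)\,\psi_{p-k,n}(x)\,dx= \begin{cases} \displaystyle (-1)^k\frac{2^{n+1}\,n!}{(n+k)!\,(n-k)!}\,\frac{1}{2p+1}\prod_{i=1}^n\frac{2i-1}{(2p+1)^2-4i^2}, & k=0,1,\dots,n,\\[2mm] 0, & k=n+1,\dots,p. \end{cases} \]
   Context: $L_j$ denotes the Legendre polynomial of degree $j$ on $(-1,1)$, normalized so that $L_j(1)=1$ and $\int_{-1}^1 L_iL_j=\frac{2}{2i+1}\delta_{ij}$. The $n$-th primitive is defined recursively by $\psi_{i,0}:=L_i$ and $\psi_{i,n}(x):=\int_{-1}^x\psi_{i,n-1}(\zeta)\,d\zeta$ for $n\ge1$. *)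

theory Defs
  imports "HOL-Analysis.Analysis"
begin

text \<open>Legendre polynomials on (-1,1), normalized by L_j(1) = 1, defined via
  Bonnet's three-term recurrence (n+1) L_{n+1} = (2n+1) x L_n - n L_{n-1}.\<close>
fun legendre :: "nat \<Rightarrow> real \<Rightarrow> real" where
  "legendre 0 x = 1"
| "legendre (Suc 0) x = x"
| "legendre (Suc (Suc n)) x =
     ((2 * real n + 3) * x * legendre (Suc n) x - (real n + 1) * legendre n x) / (real n + 2)"

fun legendre_prim :: "nat \<Rightarrow> nat \<Rightarrow> real \<Rightarrow> real" where
  "legendre_prim i 0 x = legendre i x"
| "legendre_prim i (Suc n) x = integral {-1..x} (legendre_prim i n)"

end

theory Submission
  imports Defs "HOL-Computational_Algebra.Polynomial"
begin
fun P :: "nat \<Rightarrow> real poly" where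
  "P 0 = 1"
| "P (Suc 0) = [:0,1:]"
| "P (Suc (Suc n)) = smult (1/(real n+2)) (smult (2*real n+3) ([:0,1:] * P (Suc n)) - smult (real n+1) (P n))"

lemma P_rec_ev[no_atp]: "(real m+2) * poly (P (Suc (Suc m))) x = (2*real m+3) * x * poly (P (Suc m)) x - (real m+1) * poly (P m) x"
  by (simp add: field_simps)

lemma P_legendre: "poly (P n) x = legendre n x"
  by (induction n rule: P.induct) (simp_all add: field_simps)

declare P.simps(3)[simp del]

lemma P_rec: "smult (real n+2) (P (Suc (Suc n))) = smult (2*real n+3) ([:0,1:] * P (Suc n)) - smult (real n+1) (P n)"
proof -
  have "real n + 2 \<noteq> 0" by simp
  then show ?thesis by (simp add: P.simps(3))
qed

lemma deg_P: "degree (P n) \<le> n"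
proof (induction n rule: P.induct)
  case (3 n)
  have "degree ([:0,1:] * P (Suc n)) \<le> Suc (Suc n)"
    using degree_mult_le[of "[:0,1:]" "P (Suc n)"] 3 by simp
  then have d1: "degree (smult (2*real n+3) ([:0,1:] * P (Suc n))) \<le> Suc (Suc n)"
    by (rule order.trans[OF degree_smult_le])
  have "degree (P n) \<le> Suc (Suc n)" using 3 by simp
  then have d2: "degree (smult (real n+1) (P n)) \<le> Suc (Suc n)"
    by (rule order.trans[OF degree_smult_le])
  have "degree (smult (2*real n+3) ([:0,1:] * P (Suc n)) - smult (real n+1) (P n)) \<le> Suc (Suc n)"
    by (rule degree_diff_le[OF d1 d2])
  then show ?case
    unfolding P.simps(3) by (rule order.trans[OF degree_smult_le])
qed simp_all

lemma P_drec_ev: "(real m+2) * poly (pderiv (P (Suc (Suc m)))) x =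
   (2*real m+3) * (poly (P (Suc m)) x + x * poly (pderiv (P (Suc m))) x) - (real m+1) * poly (pderiv (P m)) x"
proof -
  have "pderiv (P (Suc (Suc m))) = smult (1/(real m+2)) (smult (2*real m+3) (P (Suc m) + [:0,1:] * pderiv (P (Suc m))) - smult (real m+1) (pderiv (P m)))"
    by (simp add: P.simps(3) pderiv_mult pderiv_smult pderiv_diff pderiv_pCons smult_add_right)
  then show ?thesis by (simp add: field_simps)
qed

lemma P_deriv_ab: "x * poly (pderiv (P (Suc m))) x = poly (pderiv (P m)) x + (real m + 1) * poly (P (Suc m)) x
  \<and> poly (pderiv (P (Suc (Suc m)))) x = (2*real m+3) * poly (P (Suc m)) x + poly (pderiv (P m)) x"
proof (induction m arbitrary: x rule: less_induct)
  case (less m)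
  have b: "x * poly (pderiv (P (Suc m))) x = poly (pderiv (P m)) x + (real m + 1) * poly (P (Suc m)) x"
  proof (cases m)
    case 0
    then show ?thesis by (simp add: pderiv_pCons)
  next
    case (Suc m')
    have IH: "x * poly (pderiv (P (Suc m'))) x = poly (pderiv (P m')) x + (real m' + 1) * poly (P (Suc m')) x"
         "poly (pderiv (P (Suc (Suc m')))) x = (2*real m'+3) * poly (P (Suc m')) x + poly (pderiv (P m')) x"
      using less[of m' x] Suc by auto
    have r: "(real m'+2) * poly (P (Suc (Suc m'))) x = (2*real m'+3) * x * poly (P (Suc m')) x - (real m'+1) * poly (P m') x"
      by (rule P_rec_ev)
    show ?thesis
    proof (cases m')
      case 0
      then show ?thesis using Suc by (simp add: P.simps(3) pderiv_pCons field_simps)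
    next
      case (Suc m'')
      have IH2: "x * poly (pderiv (P (Suc m''))) x = poly (pderiv (P m'')) x + (real m'' + 1) * poly (P (Suc m'')) x"
         "poly (pderiv (P (Suc (Suc m'')))) x = (2*real m''+3) * poly (P (Suc m'')) x + poly (pderiv (P m'')) x"
        using less[of m'' x] Suc \<open>m = Suc m'\<close> by auto
      have r2: "(real m''+2) * poly (P (Suc (Suc m''))) x = (2*real m''+3) * x * poly (P (Suc m'')) x - (real m''+1) * poly (P m'') x"
        by (rule P_rec_ev)
      have e1: "x * poly (pderiv (P (Suc (Suc m')))) x = (2*real m'+3) * x * poly (P (Suc m')) x + x * poly (pderiv (P m')) x"
        using IH(2) by (simp add: algebra_simps)
      have e2: "x * poly (pderiv (P m')) x = poly (pderiv (P m'')) x + real m' * poly (P m') x"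
        using IH2(1) Suc by simp
      have e3: "poly (pderiv (P (Suc m'))) x = (2*real m''+3) * poly (P m') x + poly (pderiv (P m'')) x"
        using IH2(2) Suc by simp
      have e4: "(real m'+2) * poly (P (Suc (Suc m'))) x = (2*real m'+3) * x * poly (P (Suc m')) x - (real m'+1) * poly (P m') x"
        by (rule P_rec_ev)
      have rm: "real m' = real m'' + 1" using Suc by simp
      have "x * poly (pderiv (P (Suc (Suc m')))) x = poly (pderiv (P (Suc m'))) x + (real m' + 2) * poly (P (Suc (Suc m'))) x"
      proof -
        have "x * poly (pderiv (P (Suc (Suc m')))) x = (2*real m'+3) * x * poly (P (Suc m')) x + (poly (pderiv (P m'')) x + real m' * poly (P m') x)"
          unfolding e1 e2 by simp
        also have "\<dots> = (2*real m''+3) * poly (P m') x + poly (pderiv (P m'')) x + ((2*real m'+3) * x * poly (P (Suc m')) x - (real m'+1) * poly (P m') x)"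
          unfolding rm by (simp add: algebra_simps)
        also have "\<dots> = poly (pderiv (P (Suc m'))) x + (real m' + 2) * poly (P (Suc (Suc m'))) x"
          unfolding e3 e4 by simp
        finally show ?thesis .
      qed
      then show ?thesis using \<open>m = Suc m'\<close> by (simp add: algebra_simps)
    qed
  qed
  have "(real m+2) * poly (pderiv (P (Suc (Suc m)))) x = (real m+2) * ((2*real m+3) * poly (P (Suc m)) x + poly (pderiv (P m)) x)"
    unfolding P_drec_ev distrib_left[of "2*real m+3"] b by (simp add: algebra_simps)
  then have a: "poly (pderiv (P (Suc (Suc m)))) x = (2*real m+3) * poly (P (Suc m)) x + poly (pderiv (P m)) x"
    by (metis mult_cancel_left add_nonneg_pos of_nat_0_le_iff zero_less_numeral less_irrefl)
  show ?case using a b by blast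
qed

lemma P_deriv: "pderiv (P (Suc (Suc m))) = smult (2*real m+3) (P (Suc m)) + pderiv (P m)"
  by (subst poly_eq_poly_eq_iff[symmetric]) (simp add: fun_eq_iff P_deriv_ab)

lemma P_one: "poly (P n) 1 = 1"
  by (induction n rule: P.induct) (simp_all add: P.simps(3) field_simps)

lemma P_mone: "poly (P n) (-1) = (-1)^n"
  by (induction n rule: P.induct) (simp_all add: P.simps(3) field_simps)

fun Psi :: "nat \<Rightarrow> nat \<Rightarrow> real poly" where
  "Psi i 0 = P i"
| "Psi i (Suc n) = (if i = 0 then smult (1/fact (Suc n)) ([:1,1:]^Suc n)
     else smult (1/(2*real i+1)) (Psi (Suc i) n - Psi (i-1) n))"

lemma Psi_Suc0: "Psi 0 (Suc n) = smult (1/fact (Suc n)) ([:1,1:]^Suc n)"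
  by simp

lemma Psi_SucS: "Psi (Suc i) (Suc n) = smult (1/(2*real i+3)) (Psi (Suc (Suc i)) n - Psi i n)"
  by (simp add: add.commute add.left_commute)

declare Psi.simps(2)[simp del]

lemma Psi_deriv: "pderiv (Psi i (Suc n)) = Psi i n"
proof (induction n arbitrary: i)
  case 0
  show ?case
  proof (cases i)
    case 0 then show ?thesis by (simp add: pderiv_pCons Psi_Suc0)
  next
    case (Suc j)
    have "pderiv (Psi (Suc j) (Suc 0)) = smult (1/(2*real j+3)) (pderiv (P (Suc (Suc j))) - pderiv (P j))"
      unfolding Psi_SucS by (simp add: pderiv_diff pderiv_smult)
    also have "\<dots> = smult (1/(2*real j+3)) (smult (2*real j+3) (P (Suc j)))"
      unfolding P_deriv by simp
    also have "\<dots> = P (Suc j)"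
      by (simp add: smult_smult)
    finally show ?thesis using Suc by simp
  qed
next
  case (Suc n)
  show ?case
  proof (cases i)
    case 0
    have "pderiv (smult (1 / fact (Suc (Suc n))) ([:1, 1:] ^ Suc (Suc n))) =
       smult (1 / fact (Suc n)) ([:1, 1:] ^ Suc n :: real poly)"
      unfolding pderiv_smult pderiv_power_Suc by (simp add: pderiv_pCons)
    then show ?thesis using 0 by (simp add: Psi_Suc0)
  next
    case (Suc j)
    then show ?thesis using Suc.IH by (simp add: Psi_SucS[of j "Suc n"] Psi_SucS[of j n] pderiv_diff pderiv_smult)
  qed
qed

lemma Psi_mone: "poly (Psi i (Suc n)) (-1) = 0"
proof (induction n arbitrary: i)
  case 0
  then show ?case by (cases i) (simp_all add: P_mone Psi_Suc0 Psi_SucS)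
next
  case (Suc n)
  show ?case
  proof (cases i)
    case 0 then show ?thesis by (simp add: Psi_Suc0)
  next
    case (Suc j)
    then show ?thesis by (simp only: Psi_SucS[of j "Suc n"] poly_smult poly_diff Suc.IH) simp
  qed
qed

lemma Psi_one: "1 \<le> j \<Longrightarrow> j \<le> i \<Longrightarrow> poly (Psi i j) 1 = 0"
proof (induction j arbitrary: i)
  case 0
  then show ?case by simp
next
  case (Suc j)
  then obtain i' where i': "i = Suc i'" by (cases i) auto
  show ?case
  proof (cases j)
    case 0
    then show ?thesis using i' by (simp add: P_one Psi_SucS)
  next
    case (Suc j')
    then have "poly (Psi (Suc (Suc i')) j) 1 = 0" "poly (Psi i' j) 1 = 0"
      using Suc.IH Suc.prems i' by auto
    then show ?thesis using i' by (simp add: Psi_SucS[of i' j])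
  qed
qed

lemma poly_eq_by_deriv:
  fixes f g :: "real poly"
  assumes "pderiv f = pderiv g" "poly f (-1) = poly g (-1)"
  shows "f = g"
proof -
  have "pderiv (f - g) = 0" using assms by (simp add: pderiv_diff)
  then have "degree (f - g) = 0" by (simp add: pderiv_eq_0_iff)
  then obtain c where c: "f - g = [:c:]" by (meson degree_eq_zeroE)
  then have "c = poly (f - g) (-1)" by simp
  also have "\<dots> = 0" using assms by simp
  finally show ?thesis using c by simp
qed

lemma Psi0_Suc: "Psi 0 (Suc n) = Psi 0 n + Psi 1 n"
proof (induction n)
  case 0
  then show ?case by (simp add: one_pCons Psi_Suc0)
next
  case (Suc n)
  show ?case
  proof (rule poly_eq_by_deriv)
    show "pderiv (Psi 0 (Suc (Suc n))) = pderiv (Psi 0 (Suc n) + Psi 1 (Suc n))"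
      unfolding Psi_deriv pderiv_add using Suc.IH .
    show "poly (Psi 0 (Suc (Suc n))) (- 1) = poly (Psi 0 (Suc n) + Psi 1 (Suc n)) (- 1)"
      by (simp only: poly_add Psi_mone)
  qed
qed

lemma deg_Psi0: "degree (Psi 0 n) \<le> n"
proof (cases n)
  case (Suc m)
  have "degree ([:1,1:]^Suc m :: real poly) \<le> Suc m"
    by (metis degree_linear_power order_refl one_neq_zero)
  then show ?thesis using Suc by (simp add: Psi_Suc0 order.trans[OF degree_smult_le])
qed simp

lemma legendre_prim_Psi: "x \<ge> -1 \<Longrightarrow> legendre_prim i n x = poly (Psi i n) x"
proof (induction n arbitrary: x)
  case 0
  then show ?case by (simp add: P_legendre)
next
  case (Suc n)
  have "legendre_prim i (Suc n) x = integral {-1..x} (legendre_prim i n)" by simp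
  also have "\<dots> = integral {-1..x} (poly (Psi i n))"
    by (rule integral_cong) (use Suc.IH in auto)
  also have "\<dots> = poly (Psi i (Suc n)) x - poly (Psi i (Suc n)) (-1)"
  proof (rule integral_unique, rule fundamental_theorem_of_calculus)
    show "- 1 \<le> x" using Suc.prems by simp
    fix t
    show "(poly (Psi i (Suc n)) has_vector_derivative poly (Psi i n) t) (at t within {- 1..x})"
      using poly_DERIV[of "Psi i (Suc n)" t] Psi_deriv[of i n]
      by (metis has_field_derivative_at_within has_real_derivative_iff_has_vector_derivative)
  qed
  also have "\<dots> = poly (Psi i (Suc n)) x" by (simp add: Psi_mone)
  finally show ?case .
qed


definition pint :: "real poly \<Rightarrow> real" where
  "pint q = integral {-1..1} (poly q)"

lemma poly_integrable: "poly q integrable_on {-1..1::real}"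
  by (intro integrable_continuous_interval continuous_intros)

lemma pint_add: "pint (p + q) = pint p + pint q"
  unfolding pint_def poly_add[abs_def] by (rule integral_add[OF poly_integrable poly_integrable])

lemma pint_diff: "pint (p - q) = pint p - pint q"
  unfolding pint_def poly_diff[abs_def] by (rule integral_diff[OF poly_integrable poly_integrable])

lemma pint_smult: "pint (smult c p) = c * pint p"
  unfolding pint_def poly_smult[abs_def] by (rule integral_mult_right)

lemma pint_zero: "pint 0 = 0"
proof -
  have "poly 0 = (\<lambda>x::real. 0)" by (simp add: fun_eq_iff)
  then show ?thesis unfolding pint_def by simp
qed

lemma pint_one: "pint 1 = 2"
proof -
  have "poly 1 = (\<lambda>x::real. 1)" by (simp add: fun_eq_iff)
  then show ?thesis unfolding pint_def by simp
qed

lemma pint_pderiv: "pint (pderiv h) = poly h 1 - poly h (-1)"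
  unfolding pint_def
proof (rule integral_unique, rule fundamental_theorem_of_calculus)
  fix t :: real
  show "(poly h has_vector_derivative poly (pderiv h) t) (at t within {- 1..1})"
    using poly_DERIV[of h t]
    by (metis has_field_derivative_at_within has_real_derivative_iff_has_vector_derivative)
qed simp

lemma pint_parts: "pint (pderiv F * G) = poly F 1 * poly G 1 - poly F (-1) * poly G (-1) - pint (F * pderiv G)"
proof -
  have c: "G * pderiv F = pderiv F * G" by (rule mult.commute)
  have "pint (pderiv (F * G)) = pint (pderiv F * G) + pint (F * pderiv G)"
    unfolding pderiv_mult pint_add c by simp
  then show ?thesis by (simp add: pint_pderiv)
qed

lemma moment: "degree q + m < a \<Longrightarrow> pint (Psi a m * q) = 0"
proof (induction "degree q" arbitrary: q m rule: less_induct)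
  case less
  have "pint (Psi a m * q) = pint (pderiv (Psi a (Suc m)) * q)" by (simp add: Psi_deriv)
  also have "\<dots> = - pint (Psi a (Suc m) * pderiv q)"
    unfolding pint_parts using less.prems by (simp add: Psi_one Psi_mone)
  also have "\<dots> = 0"
  proof (cases "degree q = 0")
    case True
    then show ?thesis by (simp add: pderiv_eq_0_iff[symmetric] pint_zero)
  next
    case False
    then have "degree (pderiv q) < degree q" "degree (pderiv q) + Suc m < a"
      using less.prems by (simp_all add: degree_pderiv)
    then show ?thesis using less.hyps by simp
  qed
  finally show ?case .
qed

lemma orth: "i < j \<Longrightarrow> pint (P j * P i) = 0"
  using moment[of "P i" 0 j] deg_P[of i] by simp

lemma P_rec1: "smult (real m+1) (P (Suc m)) = smult (2*real m+1) ([:0,1:] * P m) - smult (real m) (P (m-1))"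
proof (cases m)
  case 0
  then show ?thesis by simp
next
  case (Suc m')
  have "real m' + 2 \<noteq> 0" by simp
  then show ?thesis using Suc by (simp add: P.simps(3) algebra_simps)
qed

lemma norm_P: "pint (P n * P n) = 2 / (2 * real n + 1)"
proof (induction n)
  case 0
  then show ?case by (simp add: pint_one)
next
  case (Suc m)
  have h1: "(real m+1) * pint (P (Suc m) * P (Suc m)) = (2*real m+1) * pint ([:0,1:] * P m * P (Suc m)) - real m * pint (P (m-1) * P (Suc m))"
  proof -
    have "(real m+1) * pint (P (Suc m) * P (Suc m)) = pint (smult (real m+1) (P (Suc m)) * P (Suc m))"
      by (simp add: pint_smult)
    also have "\<dots> = pint ((smult (2*real m+1) ([:0,1:] * P m) - smult (real m) (P (m-1))) * P (Suc m))"
      unfolding P_rec1 ..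
    also have "\<dots> = (2*real m+1) * pint ([:0,1:] * P m * P (Suc m)) - real m * pint (P (m-1) * P (Suc m))"
      by (simp only: left_diff_distrib mult_smult_left pint_diff pint_smult)
    finally show ?thesis .
  qed
  have h2: "(real m+2) * pint (P (Suc (Suc m)) * P m) = (2*real m+3) * pint ([:0,1:] * P (Suc m) * P m) - (real m+1) * pint (P m * P m)"
  proof -
    have "(real m+2) * pint (P (Suc (Suc m)) * P m) = pint (smult (real m+2) (P (Suc (Suc m))) * P m)"
      by (simp add: pint_smult)
    also have "\<dots> = pint ((smult (2*real m+3) ([:0,1:] * P (Suc m)) - smult (real m+1) (P m)) * P m)"
      unfolding P_rec ..
    also have "\<dots> = (2*real m+3) * pint ([:0,1:] * P (Suc m) * P m) - (real m+1) * pint (P m * P m)"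
      by (simp only: left_diff_distrib mult_smult_left pint_diff pint_smult)
    finally show ?thesis .
  qed
  have o1: "pint (P (Suc (Suc m)) * P m) = 0" by (rule orth) simp
  have o2: "pint (P (m-1) * P (Suc m)) = 0" using orth[of "m-1" "Suc m"] by (simp add: mult.commute)
  have c: "[:0,1:] * P m * P (Suc m) = [:0,1:] * P (Suc m) * P m" by (simp add: ac_simps)
  define X where "X = pint ([:0,1:] * P (Suc m) * P m)"
  have A: "(2*real m+3) * X = (real m+1) * (2/(2*real m+1))"
    using h2 o1 Suc.IH unfolding X_def by simp
  have B: "(real m+1) * pint (P (Suc m) * P (Suc m)) = (2*real m+1) * X"
    unfolding X_def c[symmetric] using h1 o2 by simp
  have nz: "2*real m+3 \<noteq> 0" by simp
  have X: "X = (real m+1) * (2/(2*real m+1)) / (2*real m+3)"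
  proof -
    have "X = ((2*real m+3)*X)/(2*real m+3)" using nz by simp
    also have "\<dots> = (real m+1) * (2/(2*real m+1)) / (2*real m+3)" unfolding A ..
    finally show ?thesis .
  qed
  have nz1: "2*real m+1 \<noteq> 0" by simp
  have Y: "(2*real m+1) * X = (real m+1) * 2 / (2*real m+3)"
    unfolding X using nz1 by simp
  have nz2: "real m + 1 \<noteq> 0" by simp
  have E: "(real m+1) * pint (P (Suc m) * P (Suc m)) = (real m+1) * (2/(2*real m+3))"
    by (rule trans[OF B trans[OF Y times_divide_eq_right[symmetric]]])
  have F: "pint (P (Suc m) * P (Suc m)) = 2/(2*real m+3)"
    using mult_left_cancel[OF nz2, THEN iffD1, OF E] .
  have G: "2*real (Suc m)+1 = 2*real m+3" by simp
  show ?case unfolding G by (rule F)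
qed

definition V :: "nat \<Rightarrow> nat \<Rightarrow> nat \<Rightarrow> real" where
  "V n p k = (if k \<le> n then
       (-1) ^ k * (2 ^ (n + 1) * fact n / (fact (n + k) * fact (n - k)))
         * (1 / (2 * real p + 1))
         * (\<Prod>i = 1..n. (2 * real i - 1) / ((2 * real p + 1)^2 - 4 * (real i)^2))
     else 0)"

definition PiF :: "nat \<Rightarrow> real \<Rightarrow> real" where
  "PiF n x = (\<Prod>i = 1..n. (2 * real i - 1) / (x^2 - 4 * (real i)^2))"

definition tt :: "nat \<Rightarrow> nat \<Rightarrow> real" where
  "tt n k = 2 ^ (n + 1) * fact n / (fact (n + 1 + k) * fact (n + 1 - k))"

lemma PiF_Suc: "PiF (Suc n) x = PiF n x * ((2*real n+1) / (x^2 - 4*(real n+1)^2))"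
  unfolding PiF_def by (simp add: prod.cl_ivl_Suc add.commute)

lemma odd_ne: "2 * real a + 1 \<noteq> 2 * real (b::nat)"
proof
  assume "2 * real a + 1 = 2 * real b"
  then have "real (2*a+1) = real (2*b)" by simp
  then have "2*a+1 = 2*b" by (simp only: of_nat_eq_iff)
  then show False by presburger
qed

lemma PiF_shift:
  assumes x: "x = 2 * real p + 1"
  shows "PiF n (x+2) * x * (x + 2*real n + 2) = PiF n x * (x - 2*real n) * (x+2)"
proof (induction n)
  case 0
  then show ?case by (simp add: PiF_def)
next
  case (Suc n)
  define a where "a = PiF n (x+2)"
  define b where "b = PiF n x"
  have IH: "a * x * (x + 2*real n + 2) = b * (x - 2*real n) * (x+2)" using Suc unfolding a_def b_def .
  have nz1: "x - 2*real n \<noteq> 0" using odd_ne[of p n] unfolding x by linarith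
  have nz2: "x - 2*real n - 2 \<noteq> 0" using odd_ne[of p "Suc n"] unfolding x by simp
  have pos: "x > 0" "real n \<ge> 0" unfolding x by simp_all
  define u where "u = x - 2*real n"
  define v where "v = x + 2*real n + 4"
  define w where "w = x + 2*real n + 2"
  define z where "z = x - 2*real n - 2"
  have nz: "u \<noteq> 0" "v \<noteq> 0" "w \<noteq> 0" "z \<noteq> 0"
    using nz1 nz2 pos unfolding u_def v_def w_def z_def by auto
  have IH': "a * x * w = b * u * (x+2)" using IH unfolding u_def w_def .
  have d1: "(x+2)^2 - 4*(real n+1)^2 = u * v" unfolding u_def v_def by (simp add: algebra_simps power2_eq_square)
  have d2: "x^2 - 4*(real n+1)^2 = z * w" unfolding z_def w_def by (simp add: algebra_simps power2_eq_square)
  have "PiF (Suc n) (x+2) * x * (x + 2*real (Suc n) + 2) = a * ((2*real n+1)/(u * v)) * x * v"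
    unfolding PiF_Suc a_def d1 by (simp add: v_def algebra_simps)
  also have "\<dots> = (a * x * w) * ((2*real n+1)/(u * w))"
    using nz by (simp add: field_simps)
  also have "\<dots> = (b * u * (x+2)) * ((2*real n+1)/(u * w))" unfolding IH' ..
  also have "\<dots> = b * ((2*real n+1)/(z * w)) * z * (x+2)"
    using nz by (simp add: field_simps)
  also have "\<dots> = PiF (Suc n) x * (x - 2*real (Suc n)) * (x+2)"
    unfolding PiF_Suc b_def d2 by (simp add: z_def algebra_simps)
  finally show ?case .
qed


definition cc :: "nat \<Rightarrow> nat \<Rightarrow> real" where
  "cc n k = 2 ^ (n + 1) * fact n / (fact (n + k) * fact (n - k))"

lemma V_alt: "V n q k = (if k \<le> n then (-1)^k * cc n k * PiF n (2*real q+1) / (2*real q+1) else 0)"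
  unfolding V_def cc_def PiF_def by simp

lemma factS: "(fact (Suc m) :: real) = (real m + 1) * fact m"
  by (simp add: algebra_simps)

lemma R0: assumes "k \<le> n" shows "cc n k = tt n k * ((real n+1+real k)*(real n+1-real k))"
proof -
  define a1 where "a1 = real n+1+real k"
  define a2 where "a2 = real n+1-real k"
  define A where "A = (fact (n+k) :: real)"
  define B where "B = (fact (n-k) :: real)"
  have f1: "(fact (n+1+k) :: real) = a1 * A"
    using factS[of "n+k"] unfolding a1_def A_def by (simp add: algebra_simps)
  have e: "n+1-k = Suc (n-k)" using assms by simp
  have f2: "(fact (n+1-k) :: real) = a2 * B"
    unfolding e factS a2_def B_def using assms by (simp add: of_nat_diff)
  have nz: "A \<noteq> 0" "B \<noteq> 0" "a1 \<noteq> 0" "a2 \<noteq> 0"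
    using assms unfolding A_def B_def a1_def a2_def by auto
  show ?thesis unfolding cc_def tt_def f1 f2 a1_def[symmetric] a2_def[symmetric] A_def[symmetric] B_def[symmetric]
    using nz by (simp add: field_simps)
qed

lemma R1: assumes "k \<le> n+1" shows "cc (Suc n) k = tt n k * (2*(real n+1))"
proof -
  define F where "F = (fact n :: real)"
  define a where "a = real n + 1"
  have f: "(fact (Suc n) :: real) = a * F" unfolding a_def F_def by (rule factS)
  define A where "A = (fact (n+1+k) :: real)"
  define B where "B = (fact (n+1-k) :: real)"
  have e: "Suc n + k = n+1+k" "Suc n - k = n+1-k" by simp_all
  have nz: "A \<noteq> 0" "B \<noteq> 0" unfolding A_def B_def by auto
  show ?thesis unfolding cc_def tt_def f e A_def[symmetric] B_def[symmetric] F_def[symmetric] a_def[symmetric]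
    using nz by (simp add: field_simps)
qed

lemma R2: assumes "k+1 \<le> n" shows "cc n (k+1) = tt n k * ((real n+1-real k)*(real n-real k))"
proof -
  define a1 where "a1 = real n+1-real k"
  define a2 where "a2 = real n-real k"
  define A where "A = (fact (n+1+k) :: real)"
  define B where "B = (fact (n-(k+1)) :: real)"
  have e1: "n + (k+1) = n+1+k" by simp
  have e: "n+1-k = Suc (Suc (n-(k+1)))" using assms by simp
  have f2: "(fact (n+1-k) :: real) = a1 * (a2 * B)"
    unfolding e factS a1_def a2_def B_def using assms by (simp add: of_nat_diff algebra_simps)
  have nz: "A \<noteq> 0" "B \<noteq> 0" "a1 \<noteq> 0" "a2 \<noteq> 0"
    using assms unfolding A_def B_def a1_def a2_def by auto
  show ?thesis unfolding cc_def tt_def f2 e1 A_def[symmetric] B_def[symmetric] a1_def[symmetric] a2_def[symmetric]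
    using nz by (simp add: field_simps)
qed

lemma R3: assumes "1 \<le> k" "k \<le> n+1" shows "cc n (k-1) = tt n k * ((real n+real k)*(real n+real k+1))"
proof -
  define a1 where "a1 = real n+real k"
  define a2 where "a2 = real n+real k+1"
  define A where "A = (fact (n+(k-1)) :: real)"
  define B where "B = (fact (n+1-k) :: real)"
  have e: "n+1+k = Suc (Suc (n+(k-1)))" using assms by simp
  have f1: "(fact (n+1+k) :: real) = a2 * (a1 * A)"
    unfolding e factS a1_def a2_def A_def using assms by (simp add: of_nat_diff algebra_simps)
  have e2: "n - (k-1) = n+1-k" using assms by simp
  have nz: "A \<noteq> 0" "B \<noteq> 0" "a1 \<noteq> 0" "a2 \<noteq> 0"
    using assms unfolding A_def B_def a1_def a2_def by auto
  show ?thesis unfolding cc_def tt_def f1 e2 A_def[symmetric] B_def[symmetric] a2_def[symmetric]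
    unfolding a1_def[symmetric]
    using nz by (simp add: field_simps)
qed

lemma R4: assumes "1 \<le> n" shows "cc n 1 = tt n 0 * (real n * (real n+1))"
proof -
  define a1 where "a1 = real n"
  define a2 where "a2 = real n+1"
  define A where "A = (fact (n-1) :: real)"
  define X where "X = 2 ^ (n + 1) * (fact n :: real)"
  have e: "n+1 = Suc (Suc (n-1))" using assms by simp
  have f1: "(fact (n+1) :: real) = a2 * (a1 * A)"
    unfolding e factS a1_def a2_def A_def using assms by (simp add: of_nat_diff algebra_simps)
  have nz: "A \<noteq> 0" "a1 \<noteq> 0" "a2 \<noteq> 0"
    using assms unfolding A_def a1_def a2_def by auto
  have c: "cc n 1 = X / (fact (n+1) * A)"
    unfolding cc_def X_def A_def ..
  have t: "tt n 0 = X / (fact (n+1) * fact (n+1))"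
    unfolding tt_def X_def by (simp only: add_0_right diff_zero)
  show ?thesis unfolding c t f1 a2_def[symmetric] unfolding a1_def[symmetric] using nz by (simp add: field_simps)
qed


lemma VF: assumes "k \<le> n+1"
  shows "V n q k = (-1)^k * tt n k * ((real n+1+real k)*(real n+1-real k)) * PiF n (2*real q+1) / (2*real q+1)"
proof (cases "k \<le> n")
  case True
  then show ?thesis unfolding V_alt R0[OF True] by simp
next
  case False
  then have "k = n+1" using assms by simp
  then show ?thesis unfolding V_alt by simp
qed

lemma VF1: assumes "k \<le> n+1"
  shows "V (Suc n) q k = (-1)^k * tt n k * (2*(real n+1)) * PiF (Suc n) (2*real q+1) / (2*real q+1)"
  using assms unfolding V_alt R1[OF assms] by simp

lemma VFup: assumes "k \<le> n+1"
  shows "V n q (k+1) = - ((-1)^k * tt n k * ((real n+1-real k)*(real n-real k)) * PiF n (2*real q+1) / (2*real q+1))"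
proof (cases "k+1 \<le> n")
  case True
  then show ?thesis unfolding V_alt R2[OF True] by simp
next
  case False
  then have "k = n \<or> k = n+1" using assms by auto
  then show ?thesis unfolding V_alt using False by auto
qed

lemma VFdn: assumes "k \<le> n+1"
  shows "(if k = 0 then V n q 1 else V n q (k-1)) = - ((-1)^k * tt n k * ((real n+real k)*(real n+real k+1)) * PiF n (2*real q+1) / (2*real q+1))"
proof (cases "k = 0")
  case True
  show ?thesis
  proof (cases "n = 0")
    case True
    then show ?thesis using \<open>k = 0\<close> unfolding V_alt by simp
  next
    case False
    then have "1 \<le> n" by simp
    then show ?thesis using \<open>k = 0\<close> unfolding V_alt R4[OF \<open>1 \<le> n\<close>] by simp
  qed
next
  case False
  then have k1: "1 \<le> k" by simp
  have s: "(-1::real)^(k-1) = - ((-1)^k)"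
    using k1 by (metis Suc_diff_1 less_le_trans mult_minus1 power_Suc zero_less_one minus_minus)
  have "k - 1 \<le> n" using assms by simp
  then show ?thesis using False unfolding V_alt R3[OF k1 assms] s by simp
qed

lemma key_identity:
  fixes x N K :: real
  assumes "x \<noteq> 0" "x + 2*N + 2 \<noteq> 0" "x - 2*N - 2 \<noteq> 0"
  shows "2*(N+1)*(2*N+1) / (x * ((x - 2*N - 2) * (x + 2*N + 2))) * ((x + 2*K) * (x - 2*K)) =
    (1/x) * (((N+1+K)*(N+1-K)) * (x - 2*N) / (x + 2*N + 2)
      + ((N+1-K)*(N-K) + (N+K)*(N+K+1))
      + ((N+1+K)*(N+1-K)) * (x + 2*N) / (x - 2*N - 2))"
proof -
  define w where "w = x + 2*N + 2"
  define z where "z = x - 2*N - 2"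
  have nz: "x \<noteq> 0" "w \<noteq> 0" "z \<noteq> 0" using assms unfolding w_def z_def by auto
  have e1: "x - 2*N = z + 2" "x + 2*N = w - 2" unfolding w_def z_def by simp_all
  have "2*(N+1)*(2*N+1) / (x * (z * w)) * ((x + 2*K) * (x - 2*K)) =
    (1/x) * (((N+1+K)*(N+1-K)) * (z+2) / w
      + ((N+1-K)*(N-K) + (N+K)*(N+K+1))
      + ((N+1+K)*(N+1-K)) * (w-2) / z)"
  proof -
    have p: "2*(N+1)*(2*N+1) * ((x + 2*K) * (x - 2*K)) =
       ((N+1+K)*(N+1-K)) * (z+2) * z + ((N+1-K)*(N-K) + (N+K)*(N+K+1)) * (z * w) + ((N+1+K)*(N+1-K)) * (w-2) * w"
      unfolding w_def z_def by (simp add: algebra_simps power2_eq_square)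
    show ?thesis using nz p by (simp add: field_simps)
  qed
  then show ?thesis unfolding z_def[symmetric] w_def[symmetric] unfolding e1 .
qed


lemma Vrec: assumes "n+1 \<le> p" "k \<le> p"
  shows "V (Suc n) p k * ((2*real p+2*real k+1)*(2*real p-2*real k+1)) =
    V n (p+1) k - V n p (k+1) - (if k = 0 then V n p 1 else V n p (k-1)) + V n (p-1) k"
proof (cases "k \<le> n+1")
  case False
  then show ?thesis unfolding V_alt by auto
next
  case True
  define x where "x = 2*real p+1"
  define sg where "sg = (-1::real)^k"
  define t where "t = tt n k"
  define T where "T = PiF n x"
  define A where "A = (real n+1+real k)*(real n+1-real k)"
  define B1 where "B1 = (real n+1-real k)*(real n-real k)"
  define B2 where "B2 = (real n+real k)*(real n+real k+1)"
  define u where "u = x - 2*real n"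
  define vv where "vv = x + 2*real n"
  define w where "w = x + 2*real n + 2"
  define z where "z = x - 2*real n - 2"
  define dp where "dp = x + 2"
  define dm where "dm = x - 2"
  have p1: "1 \<le> p" using assms by simp
  have xp: "2*real (p+1)+1 = dp" unfolding dp_def x_def by simp
  have xm: "2*real (p-1)+1 = dm" unfolding dm_def x_def using p1 by (simp add: of_nat_diff)
  have xm': "dm = 2*real (p-1)+1" using xm by simp
  have nzu: "u \<noteq> 0" using odd_ne[of p n] unfolding u_def x_def by linarith
  have nzz: "z \<noteq> 0" using odd_ne[of p "Suc n"] unfolding z_def x_def by simp
  have nzzm: "dm - 2*real n - 2 \<noteq> 0" using odd_ne[of "p-1" "Suc n"] unfolding xm' by simp
  have nz: "x \<noteq> 0" "w \<noteq> 0" "dp \<noteq> 0" "dm \<noteq> 0" "vv \<noteq> 0"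
    unfolding x_def w_def dp_def dm_def vv_def using p1 by auto
  have sh1: "PiF n dp = T*u*dp/(x*w)"
  proof -
    have "PiF n (x+2) * x * (x + 2*real n + 2) = PiF n x * (x - 2*real n) * (x+2)"
      by (rule PiF_shift[OF x_def])
    then have "PiF n dp * (x * w) = T*u*dp" unfolding dp_def[symmetric] w_def[symmetric] u_def[symmetric] T_def[symmetric]
      by (simp add: algebra_simps)
    then show ?thesis using nz by (simp add: field_simps)
  qed
  have sh2: "PiF n dm = T*dm* vv/(z*x)"
  proof -
    have "PiF n (dm+2) * dm * (dm + 2*real n + 2) = PiF n dm * (dm - 2*real n) * (dm+2)"
      by (rule PiF_shift[OF xm'])
    moreover have "dm + 2 = x" "dm + 2*real n + 2 = vv" "dm - 2*real n = z" unfolding dm_def vv_def z_def by simp_all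
    ultimately have "PiF n x * dm * vv = PiF n dm * z * x" by simp
    then have "PiF n dm * (z * x) = T*dm* vv" unfolding T_def by (simp add: algebra_simps)
    then show ?thesis using nz nzz by (simp add: field_simps)
  qed
  have pf: "PiF (Suc n) x = T * ((2*real n+1)/(z*w))"
  proof -
    have "x^2 - 4*(real n+1)^2 = z*w" unfolding z_def w_def by (simp add: algebra_simps power2_eq_square)
    then show ?thesis unfolding PiF_Suc T_def by simp
  qed
  have L: "V (Suc n) p k * ((2*real p+2*real k+1)*(2*real p-2*real k+1)) =
      sg*t*T * (2*(real n+1)*(2*real n+1) / (x * (z * w)) * ((x + 2*real k) * (x - 2*real k)))"
  proof -
    have e: "(2*real p+2*real k+1)*(2*real p-2*real k+1) = (x + 2*real k) * (x - 2*real k)"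
      unfolding x_def by (simp add: algebra_simps)
    show ?thesis unfolding VF1[OF True] e x_def[symmetric] sg_def[symmetric] t_def[symmetric] pf
      using nz nzz by (simp add: field_simps)
  qed
  have r1: "V n (p+1) k = sg*t*T*((1/x)*(A*u/w))"
    unfolding VF[OF True] xp sh1 sg_def[symmetric] t_def[symmetric] A_def[symmetric]
    using nz by (simp add: field_simps)
  have r2: "V n p (k+1) = -(sg*t*T*((1/x)*B1))"
    unfolding VFup[OF True] x_def[symmetric] T_def[symmetric] sg_def[symmetric] t_def[symmetric] B1_def[symmetric]
    using nz by (simp add: field_simps)
  have r3: "(if k = 0 then V n p 1 else V n p (k-1)) = -(sg*t*T*((1/x)*B2))"
    unfolding VFdn[OF True] x_def[symmetric] T_def[symmetric] sg_def[symmetric] t_def[symmetric] B2_def[symmetric]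
    using nz by (simp add: field_simps)
  have r4: "V n (p-1) k = sg*t*T*((1/x)*(A* vv/z))"
    unfolding VF[OF True] xm sh2 sg_def[symmetric] t_def[symmetric] A_def[symmetric]
    using nz nzz by (simp add: field_simps)
  have K: "2*(real n+1)*(2*real n+1) / (x * (z * w)) * ((x + 2*real k) * (x - 2*real k)) =
    (1/x) * (A * u / w + (B1 + B2) + A * vv / z)"
    using key_identity[of x "real n" "real k"] nz nzz unfolding A_def B1_def B2_def u_def vv_def w_def z_def
    by simp
  show ?thesis unfolding L r1 r2 r3 r4 K by (simp add: algebra_simps)
qed


lemma pint_prod4: "pint (smult c1 (X1 - X2) * smult c2 (Y1 - Y2)) = c1*c2*(pint (X1*Y1) - pint (X1*Y2) - pint (X2*Y1) + pint (X2*Y2))"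
  by (simp add: mult_smult_left mult_smult_right ring_distribs pint_diff pint_smult pint_add algebra_simps)

lemma pint_prod3: "pint (smult c1 (X1 - X2) * (Y1 + Y2)) = c1*(pint (X1*Y1) + pint (X1*Y2) - pint (X2*Y1) - pint (X2*Y2))"
  by (simp add: mult_smult_left ring_distribs pint_diff pint_smult pint_add algebra_simps)

lemma main: "n \<le> p \<Longrightarrow> k \<le> p \<Longrightarrow> pint (Psi (p+k) n * Psi (p-k) n) = V n p k"
proof (induction n arbitrary: p k)
  case 0
  show ?case
  proof (cases "k = 0")
    case True
    then show ?thesis by (simp add: norm_P V_def)
  next
    case False
    then have "p - k < p + k" by simp
    from orth[OF this] False show ?thesis by (simp add: V_def)
  qed
next
  case (Suc n)
  have p1: "1 \<le> p" using Suc.prems by simp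
  show ?case
  proof (cases "k < p")
    case True
    obtain a' where a': "p + k = Suc a'" using p1 by (cases "p+k") auto
    obtain b' where b': "p - k = Suc b'" using True by (cases "p-k") auto
    have ea1: "Suc (Suc a') = (p+1)+k" using a' True by simp
    have ea2: "a' = (p-1)+k" using a' True by simp
    have eb1: "Suc (Suc b') = (p+1)-k" using b' True by simp
    have eb2: "b' = (p-1)-k" using b' True by simp
    have i1: "pint (Psi (Suc (Suc a')) n * Psi (Suc (Suc b')) n) = V n (p+1) k"
      unfolding ea1 eb1 using Suc.prems by (intro Suc.IH) auto
    have i4: "pint (Psi a' n * Psi b' n) = V n (p-1) k"
      unfolding ea2 eb2 using Suc.prems True by (intro Suc.IH) auto
    have i2: "pint (Psi (Suc (Suc a')) n * Psi b' n) = V n p (k+1)"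
    proof -
      have "Suc (Suc a') = p + (k+1)" "b' = p - (k+1)" using a' b' True by simp_all
      then show ?thesis using Suc.prems True by (simp only:) (intro Suc.IH, auto)
    qed
    have i3: "pint (Psi a' n * Psi (Suc (Suc b')) n) = (if k = 0 then V n p 1 else V n p (k-1))"
    proof (cases "k = 0")
      case True
      then have "a' = p - 1" "Suc (Suc b') = p + 1" using a' b' by simp_all
      then have "pint (Psi a' n * Psi (Suc (Suc b')) n) = pint (Psi (p+1) n * Psi (p-1) n)"
        by (simp add: mult.commute)
      also have "\<dots> = V n p 1" using Suc.prems p1 by (intro Suc.IH) auto
      finally show ?thesis using True by simp
    next
      case False
      have e1: "a' = p + (k-1)" "Suc (Suc b') = p - (k-1)" using a' b' True False by simp_all
      have "pint (Psi a' n * Psi (Suc (Suc b')) n) = V n p (k-1)"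
        unfolding e1 using Suc.prems by (intro Suc.IH) auto
      then show ?thesis using False by simp
    qed
    have c: "(2*real a'+3) * (2*real b'+3) = (2*real p+2*real k+1)*(2*real p-2*real k+1)"
    proof -
      have ra: "real a' = real p + real k - 1" and rb: "real b' = real p - real k - 1"
        using a' b' True by (simp_all add: of_nat_diff)
      show ?thesis unfolding ra rb by (simp add: algebra_simps)
    qed
    have nzc: "(2*real a'+3) * (2*real b'+3) \<noteq> 0" by simp
    have "pint (Psi (p+k) (Suc n) * Psi (p-k) (Suc n)) =
       1/(2*real a'+3) * (1/(2*real b'+3)) * (V n (p+1) k - V n p (k+1) - (if k = 0 then V n p 1 else V n p (k-1)) + V n (p-1) k)"
      unfolding a' b' Psi_SucS pint_prod4 i1 i2 i3 i4 ..
    also have "\<dots> = V (Suc n) p k"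
      unfolding Vrec[OF _ Suc.prems(2), symmetric, OF Suc.prems(1)[unfolded Suc_eq_plus1]] c[symmetric]
      using nzc by (simp add: field_simps)
    finally show ?thesis .
  next
    case False
    then have kp: "k = p" using Suc.prems by simp
    obtain a' where a': "p + k = Suc a'" using p1 by (cases "p+k") auto
    have b0: "p - k = 0" using kp by simp
    have a2: "a' = 2*p - 1" using a' kp by simp
    have ra: "real a' = 2 * real p - 1" unfolding a2 using p1 by (simp add: of_nat_diff)
    have m1: "pint (Psi (Suc (Suc a')) n * Psi 0 n) = 0"
      using deg_Psi0[of n] a' kp Suc.prems by (intro moment) auto
    have m2: "pint (Psi a' n * Psi 0 n) = 0"
      using deg_Psi0[of n] a' kp Suc.prems by (intro moment) auto
    have j1: "pint (Psi (Suc (Suc a')) n * Psi 1 n) = V n (p+1) p"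
    proof -
      have h: "pint (Psi ((p+1)+p) n * Psi ((p+1)-p) n) = V n (p+1) p"
        by (rule Suc.IH) (use Suc.prems in auto)
      have e: "Suc (Suc a') = (p+1)+p" using a' kp by simp
      have e2: "(p+1)-p = 1" by simp
      show ?thesis using h unfolding e e2 .
    qed
    have j2: "pint (Psi a' n * Psi 1 n) = V n p (p-1)"
    proof -
      have h: "pint (Psi (p+(p-1)) n * Psi (p-(p-1)) n) = V n p (p-1)"
        by (rule Suc.IH) (use Suc.prems in auto)
      have e: "a' = p+(p-1)" using a' kp p1 by simp
      have e2: "p-(p-1) = 1" using p1 by simp
      show ?thesis using h unfolding e e2 .
    qed
    have z1: "V n p (p+1) = 0" using Suc.prems by (simp add: V_def)
    have z2: "V n (p-1) p = 0" using Suc.prems by (simp add: V_def)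
    have vr: "V (Suc n) p p * ((2*real p+2*real p+1)*(2*real p-2*real p+1)) = V n (p+1) p - V n p (p-1)"
      using Vrec[of n p p] Suc.prems p1 z1 z2 by simp
    have c: "2*real a'+3 = (2*real p+2*real p+1)*(2*real p-2*real p+1)" unfolding ra by simp
    have nzc: "2*real a'+3 \<noteq> 0" by simp
    have "pint (Psi (p+k) (Suc n) * Psi (p-k) (Suc n)) =
       1/(2*real a'+3) * (pint (Psi (Suc (Suc a')) n * Psi 0 n) + pint (Psi (Suc (Suc a')) n * Psi 1 n)
          - pint (Psi a' n * Psi 0 n) - pint (Psi a' n * Psi 1 n))"
      unfolding a' b0 Psi_SucS Psi0_Suc pint_prod3 ..
    also have "\<dots> = 1/(2*real a'+3) * (V n (p+1) p - V n p (p-1))"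
      unfolding m1 m2 j1 j2 by simp
    also have "\<dots> = V (Suc n) p p"
      unfolding vr[symmetric] c[symmetric] using nzc by simp
    finally show ?thesis using kp by simp
  qed
qed

theorem proposition3:
  fixes n p k :: nat
  assumes "p \<ge> n" and "k \<le> p"
  shows "integral {-1..1} (\<lambda>x. legendre_prim (p + k) n x * legendre_prim (p - k) n x) =
    (if k \<le> n then
       (-1) ^ k * (2 ^ (n + 1) * fact n / (fact (n + k) * fact (n - k)))
         * (1 / (2 * real p + 1))
         * (\<Prod>i = 1..n. (2 * real i - 1) / ((2 * real p + 1)^2 - 4 * (real i)^2))
     else 0)"
proof -
  have "integral {-1..1} (\<lambda>x. legendre_prim (p + k) n x * legendre_prim (p - k) n x) =
        integral {-1..1} (poly (Psi (p+k) n * Psi (p-k) n))"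
    by (rule integral_cong) (simp add: legendre_prim_Psi)
  also have "\<dots> = V n p k" using main[OF assms] unfolding pint_def .
  finally show ?thesis unfolding V_def .
qed

end
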